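(* Let $n\ge 1$, $a<b$, and let $f,g:[a,b]\to\mathbb{R}$ be $n$-times differentiable on $[a,b]$ with $g^{(n)}(a)\neq g^{(n)}(b)$. Then there exists $\eta\in(a,b)$ such that $$f(a)-T_n(f,\eta)(a)=\frac{f^{(n)}(b)-f^{(n)}(a)}{g^{(n)}(b)-g^{(n)}(a)}\cdot\bigl[g(a)-T_n(g,\eta)(a)\bigr].$$
   Context: $n$-times differentiable on $[a,b]$ means $n$-times differentiable on $(a,b)$ with the corresponding one-sided derivatives existing at the endpoints. $T_n(h,x_0)(x)=\sum_{k=0}^n \frac{h^{(k)}(x_0)}{k!}(x-x_0)^k$ denotes the $n$-th Taylor polynomial of $h$ at $x_0$, evaluated at $x$. *)

theory Defs
  imports Complex_Main
begin

text \<open>D is a family of derivatives of h = D 0 up to order n on [a,b]: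
  D (Suc k) is the derivative of D k on [a,b], taken within [a,b]
  (so one-sided at the endpoints).\<close>
definition n_times_differentiable_on ::
  "nat \<Rightarrow> (nat \<Rightarrow> real \<Rightarrow> real) \<Rightarrow> real set \<Rightarrow> bool" where
  "n_times_differentiable_on n D S \<longleftrightarrow>
     (\<forall>k<n. \<forall>x\<in>S. (D k has_real_derivative D (Suc k) x) (at x within S))"

definition taylor_poly :: "(nat \<Rightarrow> real \<Rightarrow> real) \<Rightarrow> nat \<Rightarrow> real \<Rightarrow> real \<Rightarrow> real" where
  "taylor_poly D n x0 x = (\<Sum>k\<le>n. D k x0 / fact k * (x - x0) ^ k)"

end

theory Submission
  imports Defs
begin

lemma tele:
  fixes E :: "nat \<Rightarrow> real \<Rightarrow> real"
  assumes "\<forall>k\<le>m. (E k has_real_derivative E (Suc k) x) (at x within S)"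
  shows "((\<lambda>y. \<Sum>k<Suc m. E k y / fact k * (a - y)^k) has_real_derivative
           E (Suc m) x / fact m * (a - x)^m) (at x within S)"
  using assms
proof (induction m)
  case 0
  then show ?case by simp
next
  case (Suc m)
  have IH: "((\<lambda>y. \<Sum>k<Suc m. E k y / fact k * (a - y)^k) has_real_derivative
           E (Suc m) x / fact m * (a - x)^m) (at x within S)" using Suc by auto
  have d2: "(E (Suc m) has_real_derivative E (Suc (Suc m)) x) (at x within S)" using Suc.prems by auto
  have T: "((\<lambda>y. E (Suc m) y / fact (Suc m) * (a - y)^Suc m) has_real_derivative
     E (Suc (Suc m)) x / fact (Suc m) * (a - x)^Suc m + E (Suc m) x / fact (Suc m) * (real (Suc m) * (a - x)^m * (-1))) (at x within S)"
    by (rule derivative_eq_intros d2 refl | simp)+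
  have "((\<lambda>y. (\<Sum>k<Suc m. E k y / fact k * (a - y)^k) + E (Suc m) y / fact (Suc m) * (a - y)^Suc m) has_real_derivative
     E (Suc m) x / fact m * (a - x)^m + (E (Suc (Suc m)) x / fact (Suc m) * (a - x)^Suc m + E (Suc m) x / fact (Suc m) * (real (Suc m) * (a - x)^m * (-1)))) (at x within S)"
    by (rule DERIV_add[OF IH T])
  moreover have "E (Suc m) x / fact m * (a - x)^m + (E (Suc (Suc m)) x / fact (Suc m) * (a - x)^Suc m + E (Suc m) x / fact (Suc m) * (real (Suc m) * (a - x)^m * (-1)))
     = E (Suc (Suc m)) x / fact (Suc m) * (a - x)^Suc m"
    by (simp add: fact_Suc)
  ultimately show ?case by simp
qed

lemma zero_lim:
  fixes D :: "nat \<Rightarrow> real \<Rightarrow> real"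
  assumes "a < b" "M \<ge> 1"
    "\<forall>k<M. \<forall>x\<in>{a..b}. (D k has_real_derivative D (Suc k) x) (at x within {a..b})"
    "\<forall>j\<le>M. D j a = 0"
  shows "((\<lambda>x. D 0 x / (a - x)^M) \<longlongrightarrow> 0) (at_right a)"
  using assms(2-)
proof (induction M arbitrary: D rule: nat_induct_at_least)
  case base
  have "(D 0 has_real_derivative D (Suc 0) a) (at a within {a..b})" using base(1) assms(1) by auto
  then have "((\<lambda>y. (D 0 y - D 0 a) / (y - a)) \<longlongrightarrow> D (Suc 0) a) (at a within {a..b})"
    using has_field_derivative_iff by blast
  then have "((\<lambda>y. D 0 y / (y - a)) \<longlongrightarrow> 0) (at_right a)"
    using base assms(1) by (simp add: at_within_Icc_at_right)
  then have "((\<lambda>y. - (D 0 y / (y - a))) \<longlongrightarrow> - 0) (at_right a)"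
    by (rule tendsto_minus)
  moreover have "- (D 0 y / (y - a)) = D 0 y / (a - y) ^ 1" for y
    by (simp add: divide_simps) (simp add: field_simps)
  ultimately show ?case by simp
next
  case (Suc M)
  have ev: "eventually (\<lambda>x. a < x \<and> x < b) (at_right a)"
    using assms(1) eventually_at_right[of a b] by auto
  have IH: "((\<lambda>x. D 1 x / (a - x)^M) \<longlongrightarrow> 0) (at_right a)"
    using Suc.IH[of "\<lambda>k. D (Suc k)"] Suc.prems by auto
  have "(D 0 has_real_derivative D 1 a) (at a within {a..b})" using Suc.prems(1) assms(1) by auto
  then have "continuous (at a within {a..b}) (D 0)" by (rule DERIV_continuous)
  then have f0: "(D 0 \<longlongrightarrow> 0) (at_right a)"
    using Suc.prems assms(1) by (simp add: continuous_within at_within_Icc_at_right)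
  have g0: "((\<lambda>x. (a - x)^Suc M) \<longlongrightarrow> 0) (at_right a)"
  proof -
    have "((\<lambda>x. (a - x)^Suc M) \<longlongrightarrow> (a - a)^Suc M) (at_right a)"
      by (intro tendsto_intros)
    then show ?thesis by simp
  qed
  have "((\<lambda>x. D 0 x / (a - x)^Suc M) \<longlongrightarrow> 0) (at_right a)"
  proof (rule lhopital_right[where f' = "D 1" and g' = "\<lambda>x. - (real (Suc M) * (a - x)^M)"])
    show "(D 0 \<longlongrightarrow> 0) (at_right a)" by (rule f0)
    show "((\<lambda>x. (a - x)^Suc M) \<longlongrightarrow> 0) (at_right a)" by (rule g0)
    show "\<forall>\<^sub>F x in at_right a. (a - x) ^ Suc M \<noteq> 0"
      using ev by (rule eventually_mono) auto
    show "\<forall>\<^sub>F x in at_right a. - (real (Suc M) * (a - x) ^ M) \<noteq> 0"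
      using ev by (rule eventually_mono) auto
    show "\<forall>\<^sub>F x in at_right a. (D 0 has_real_derivative D 1 x) (at x)"
      using ev
    proof (rule eventually_mono)
      fix x assume x: "a < x \<and> x < b"
      then have "(D 0 has_real_derivative D 1 x) (at x within {a..b})" using Suc.prems by auto
      then show "(D 0 has_real_derivative D 1 x) (at x)" using x at_within_Icc_at[of a x b] by simp
    qed
    show "\<forall>\<^sub>F x in at_right a. ((\<lambda>x. (a - x) ^ Suc M) has_real_derivative - (real (Suc M) * (a - x) ^ M)) (at x)"
      by (intro always_eventually allI) (rule derivative_eq_intros refl | simp)+
    have L: "((\<lambda>x. - (D 1 x / (a - x)^M) / real (Suc M)) \<longlongrightarrow> 0) (at_right a)"
      using tendsto_divide[OF tendsto_minus[OF IH] tendsto_const[of "real (Suc M)"]] by simp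
    have eq: "(\<lambda>x. - (D 1 x / (a - x)^M) / real (Suc M)) = (\<lambda>x. D 1 x / - (real (Suc M) * (a - x) ^ M))"
      by (rule ext) (simp add: divide_simps mult.commute)
    show "((\<lambda>x. D 1 x / - (real (Suc M) * (a - x) ^ M)) \<longlongrightarrow> 0) (at_right a)"
      using L unfolding eq .
  qed
  then show ?case .
qed

lemma flett_core:
  fixes u u' :: "real \<Rightarrow> real"
  assumes ab: "a < b" and cont: "continuous_on {a..b} u"
    and der: "\<forall>x\<in>{a<..b}. (u has_real_derivative u' x) (at x within {a..b})"
    and cond: "u b = u a \<or> (u b - u a) * u' b < 0"
  shows "\<exists>\<eta>\<in>{a<..<b}. u' \<eta> = 0"
proof -
  have ider: "(u has_real_derivative u' x) (at x)" if "a < x" "x < b" for x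
  proof -
    have "(u has_real_derivative u' x) (at x within {a..b})" using der that by auto
    then show ?thesis using at_within_Icc_at[of a x b] that by simp
  qed
  have bder: "(u has_real_derivative u' b) (at b within {a..b})" using der ab by auto
  consider "u b = u a" | "u b > u a" "u' b < 0" | "u b < u a" "u' b > 0"
    using cond by (auto simp: mult_less_0_iff)
  then show ?thesis
  proof cases
    case 1
    have "\<exists>z. a < z \<and> z < b \<and> (\<lambda>v. u' z * v) = (\<lambda>v. 0)"
      by (rule Rolle_deriv[OF ab 1[symmetric] cont, where f'="\<lambda>z v. u' z * v"])
        (use ider in \<open>auto simp: has_field_derivative_def\<close>)
    then obtain z where "a < z" "z < b" "(\<lambda>v. u' z * v) = (\<lambda>v. 0)" by blast
    then have "u' z = 0" by (metis mult_1_right)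
    then show ?thesis using \<open>a < z\<close> \<open>z < b\<close> by auto
  next
    case 2
    obtain e where "e \<in> {a..b}" and emax: "\<forall>y\<in>{a..b}. u y \<le> u e"
      using continuous_attains_sup[OF compact_Icc _ cont] ab by auto
    obtain d where d: "d > 0" "\<forall>h>0. b - h \<in> {a..b} \<longrightarrow> h < d \<longrightarrow> u b < u (b - h)"
      using has_real_derivative_neg_dec_left[OF bder 2(2)] by blast
    define h where "h = min d (b - a) / 2"
    have "h > 0" "h < d" "b - h \<in> {a..b}" using d ab by (auto simp: h_def min_def field_simps)
    then have "u b < u (b - h)" using d by auto
    then have "e \<noteq> b" using emax \<open>b - h \<in> {a..b}\<close> by force
    moreover have "u b \<le> u e" using emax ab by auto
    then have "e \<noteq> a" using 2 by auto
    ultimately have ei: "a < e" "e < b" using \<open>e \<in> {a..b}\<close> by auto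
    have "u' e = 0"
      by (rule DERIV_local_max[OF ider[OF ei], of "min (e - a) (b - e)"])
        (use ei emax in \<open>auto simp: abs_if split: if_splits\<close>)
    then show ?thesis using ei by auto
  next
    case 3
    obtain e where "e \<in> {a..b}" and emin: "\<forall>y\<in>{a..b}. u e \<le> u y"
      using continuous_attains_inf[OF compact_Icc _ cont] ab by auto
    obtain d where d: "d > 0" "\<forall>h>0. b - h \<in> {a..b} \<longrightarrow> h < d \<longrightarrow> u (b - h) < u b"
      using has_real_derivative_pos_inc_left[OF bder 3(2)] by blast
    define h where "h = min d (b - a) / 2"
    have "h > 0" "h < d" "b - h \<in> {a..b}" using d ab by (auto simp: h_def min_def field_simps)
    then have "u (b - h) < u b" using d by auto
    then have "e \<noteq> b" using emin \<open>b - h \<in> {a..b}\<close> by force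
    moreover have "u e \<le> u b" using emin ab by auto
    then have "e \<noteq> a" using 3 by auto
    ultimately have ei: "a < e" "e < b" using \<open>e \<in> {a..b}\<close> by auto
    have "u' e = 0"
      by (rule DERIV_local_min[OF ider[OF ei], of "min (e - a) (b - e)"])
        (use ei emin in \<open>auto simp: abs_if split: if_splits\<close>)
    then show ?thesis using ei by auto
  qed
qed

lemma poly_der:
  fixes c :: "nat \<Rightarrow> real"
  shows "((\<lambda>x. \<Sum>j\<le>Suc N. c j / fact j * (x - a)^j) has_real_derivative
           (\<Sum>j\<le>N. c (Suc j) / fact j * (x - a)^j)) (at x within S)"
proof -
  have eq: "(\<lambda>x. \<Sum>j\<le>Suc N. c j / fact j * (x - a)^j)
      = (\<lambda>x. c 0 + (\<Sum>j\<le>N. c (Suc j) / fact (Suc j) * (x - a)^Suc j))"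
    by (rule ext) (simp only: sum.atMost_Suc_shift, simp)
  have "((\<lambda>x. c 0 + (\<Sum>j\<le>N. c (Suc j) / fact (Suc j) * (x - a)^Suc j)) has_real_derivative
      0 + (\<Sum>j\<le>N. c (Suc j) / fact (Suc j) * (real (Suc j) * (x - a)^j * 1))) (at x within S)"
  proof -
    have pw: "((\<lambda>x. (x - a)^Suc j) has_real_derivative real (Suc j) * (x - a)^j * 1) (at x within S)" for j
      by (rule derivative_eq_intros refl | simp)+
    show ?thesis by (intro DERIV_add DERIV_const DERIV_sum DERIV_cmult pw)
  qed
  moreover have "(\<Sum>j\<le>N. c (Suc j) / fact (Suc j) * (real (Suc j) * (x - a)^j * 1))
       = (\<Sum>j\<le>N. c (Suc j) / fact j * (x - a)^j)"
    by (rule sum.cong) (auto simp: fact_Suc)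
  ultimately show ?thesis unfolding eq by simp
qed

lemma alg0:
  fixes t T F h p s :: real
  assumes "t \<noteq> 0" "T \<noteq> 0" "F > 0" "s > 0"
  shows "(s * F * - (h / F * T) * (t * T) - - (s * T) * (s * F * p)) / ((t * T) * (t * T))
       = s * (s * F) * (p - h / (s * F) * (t * T)) / (t * (t * T))"
  using assms by (simp add: field_simps)

lemma alg:
  fixes t F h p :: real
  assumes "t \<noteq> 0" "F > 0"
  shows "(real (Suc m) * F * - (h / F * t^m) * t^Suc m - - (real (Suc m) * t^m) * (real (Suc m) * F * p))
           / (t^Suc m)^Suc (Suc 0)
       = real (Suc m) * (real (Suc m) * F) * (p - h / (real (Suc m) * F) * t^Suc m) / t^Suc (Suc m)"
proof -
  have "t^m \<noteq> 0" using assms by simp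
  from alg0[OF assms(1) this assms(2), of "real (Suc m)" h p] show ?thesis
    by (simp only: power_Suc power2_eq_square) simp
qed

theorem mainTheorem13:
  fixes f g :: "real \<Rightarrow> real" and Df Dg :: "nat \<Rightarrow> real \<Rightarrow> real"
    and n :: nat and a b :: real
  assumes "n \<ge> 1" and "a < b"
    and "Df 0 = f" and "Dg 0 = g"
    and "n_times_differentiable_on n Df {a..b}"
    and "n_times_differentiable_on n Dg {a..b}"
    and "Dg n a \<noteq> Dg n b"
  shows "\<exists>\<eta>\<in>{a<..<b}. f a - taylor_poly Df n \<eta> a =
           (Df n b - Df n a) / (Dg n b - Dg n a) * (g a - taylor_poly Dg n \<eta> a)"
proof -
  obtain m where n: "n = Suc m" using assms(1) by (cases n) auto
  have ab: "a < b" by (rule assms(2))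
  define C where "C = (Df n b - Df n a) / (Dg n b - Dg n a)"
  define H where "H = (\<lambda>k x. Df k x - C * Dg k x)"
  have Hd: "\<forall>k<n. \<forall>x\<in>{a..b}. (H k has_real_derivative H (Suc k) x) (at x within {a..b})"
    using assms(5,6) unfolding n_times_differentiable_on_def H_def
    by (auto intro!: DERIV_diff DERIV_cmult)
  have den: "Dg n b - Dg n a \<noteq> 0" using assms(7) by simp
  define d where "d = H n a"
  have Hnb: "H n b = d"
    using den unfolding d_def H_def C_def by (simp add: field_simps)
  define P where "P = (\<lambda>y. H 0 a - (\<Sum>k<n. H k y / fact k * (a - y)^k))"
  define psi where "psi = (\<lambda>y. H 0 a - (\<Sum>k\<le>n. H k y / fact k * (a - y)^k))"
  have psiP: "psi y = P y - H n y / fact n * (a - y)^n" for y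
    unfolding psi_def P_def by (simp add: lessThan_Suc_atMost[symmetric])
  have Pder: "(P has_real_derivative - (H n x / fact m * (a - x)^m)) (at x within {a..b})"
    if "x \<in> {a..b}" for x
  proof -
    have "\<forall>k\<le>m. (H k has_real_derivative H (Suc k) x) (at x within {a..b})"
      using Hd that n by auto
    from tele[OF this, of a] have
      "((\<lambda>y. \<Sum>k<n. H k y / fact k * (a - y)^k) has_real_derivative H n x / fact m * (a - x)^m) (at x within {a..b})"
      by (simp add: n)
    from DERIV_diff[OF DERIV_const[of "H 0 a"] this] show ?thesis
      unfolding P_def by simp
  qed
  define u where "u = (\<lambda>y. if y = a then d else fact n * P y / (a - y)^n)"
  define u' where "u' = (\<lambda>x. real n * fact n * psi x / (a - x)^Suc n)"
  have uder: "\<forall>x\<in>{a<..b}. (u has_real_derivative u' x) (at x within {a..b})"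
  proof
    fix x assume x: "x \<in> {a<..b}"
    then have xab: "x \<in> {a..b}" by auto
    have t: "a - x \<noteq> 0" using x by auto
    have D2: "((\<lambda>y. (a - y)^n) has_real_derivative - (real n * (a - x)^m)) (at x within {a..b})"
      by (rule derivative_eq_intros refl | simp add: n)+
    have q: "((\<lambda>y. fact n * P y / (a - y)^n) has_real_derivative
        (fact n * - (H n x / fact m * (a - x)^m) * (a - x)^n - - (real n * (a - x)^m) * (fact n * P x))
          / ((a - x)^n)^Suc (Suc 0)) (at x within {a..b})"
      by (rule DERIV_quotient[OF DERIV_cmult[OF Pder[OF xab]] D2]) (use t in simp)
    have "(fact n * - (H n x / fact m * (a - x)^m) * (a - x)^n - - (real n * (a - x)^m) * (fact n * P x))
          / ((a - x)^n)^Suc (Suc 0) = u' x"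
      unfolding u'_def psiP n
      using alg[OF t, of "fact m" m "H (Suc m) x" "P x"]
      by (simp add: fact_Suc del: of_nat_Suc) 
    with q have q': "((\<lambda>y. fact n * P y / (a - y)^n) has_real_derivative u' x) (at x within {a..b})"
      by simp
    show "(u has_real_derivative u' x) (at x within {a..b})"
      by (rule has_field_derivative_transform_within[OF q', of "x - a"])
        (use x in \<open>auto simp: u_def dist_real_def\<close>)
  qed
  define p where "p = (\<lambda>k x. \<Sum>j\<le>n-k. H (k+j) a / fact j * (x - a)^j)"
  define E where "E = (\<lambda>k x. if k \<le> n then p k x else 0)"
  have pder: "(p k has_real_derivative p (Suc k) x) (at x within S)" if "k < n" for k x S
  proof -
    have e: "n - k = Suc (n - Suc k)" using that by simp
    have "p k = (\<lambda>x. \<Sum>j\<le>Suc (n - Suc k). H (k+j) a / fact j * (x - a)^j)"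
      unfolding p_def e ..
    moreover have "p (Suc k) x = (\<Sum>j\<le>n - Suc k. H (k + Suc j) a / fact j * (x - a)^j)"
      unfolding p_def by simp
    ultimately show ?thesis
      using poly_der[where c="\<lambda>j. H (k+j) a" and N="n - Suc k" and a=a and x=x and S=S] by simp
  qed
  have pa: "p k a = H k a" if "k \<le> n" for k
  proof -
    have "(\<Sum>j\<le>N. H (k+j) a / fact j * (a - a)^j) = H k a" for N
      by (induction N) auto
    then show ?thesis unfolding p_def .
  qed
  have Eder: "\<forall>k\<le>n. (E k has_real_derivative E (Suc k) x) (at x within UNIV)" for x
  proof (intro allI impI)
    fix k assume k: "k \<le> n"
    show "(E k has_real_derivative E (Suc k) x) (at x within UNIV)"
    proof (cases "k < n")
      case True
      have "E k = p k" by (rule ext) (use True in \<open>simp add: E_def\<close>)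
      moreover have "E (Suc k) x = p (Suc k) x" using True by (simp add: E_def)
      ultimately show ?thesis using pder[OF True] by simp
    next
      case False
      then have kn: "k = n" using k by simp
      have "E k = (\<lambda>x. H n a)" by (rule ext) (simp add: E_def p_def kn)
      moreover have "E (Suc k) x = 0" by (simp add: E_def kn)
      ultimately show ?thesis by simp
    qed
  qed
  have Phi: "H 0 a - (\<Sum>k<Suc n. E k x / fact k * (a - x)^k) = 0" for x
  proof -
    have "((\<lambda>y. H 0 a - (\<Sum>k<Suc n. E k y / fact k * (a - y)^k)) has_real_derivative 0) (at z)" for z
    proof -
      from DERIV_diff[OF DERIV_const[of "H 0 a"] tele[OF Eder[of z], of a]]
      show ?thesis by (simp add: E_def)
    qed
    then have "H 0 a - (\<Sum>k<Suc n. E k x / fact k * (a - x)^k) = H 0 a - (\<Sum>k<Suc n. E k a / fact k * (a - a)^k)"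
      by (rule DERIV_isconst_all[rule_format])
    also have "\<dots> = 0"
      by (simp only: sum.lessThan_Suc_shift) (simp add: E_def pa)
    finally show ?thesis .
  qed
  have Sp: "(\<Sum>k<n. p k x / fact k * (a - x)^k) = H 0 a - d / fact n * (a - x)^n" for x
  proof -
    have "(\<Sum>k<Suc n. E k x / fact k * (a - x)^k) = (\<Sum>k<n. p k x / fact k * (a - x)^k) + d / fact n * (a - x)^n"
      by (simp add: E_def d_def p_def)
    with Phi[of x] show ?thesis by simp
  qed
  define r where "r = (\<lambda>k x. H k x - p k x)"
  have rlim: "((\<lambda>x. r k x / (a - x)^(n-k)) \<longlongrightarrow> 0) (at_right a)" if k: "k < n" for k
  proof -
    have "((\<lambda>x. r (k+0) x / (a - x)^(n-k)) \<longlongrightarrow> 0) (at_right a)"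
    proof (rule zero_lim[OF ab, of "n-k" "\<lambda>j. r (k+j)"])
      show "1 \<le> n - k" using k by simp
      show "\<forall>j<n-k. \<forall>x\<in>{a..b}. (r (k+j) has_real_derivative r (k + Suc j) x) (at x within {a..b})"
        using Hd pder unfolding r_def by (auto intro!: DERIV_diff)
      show "\<forall>j\<le>n-k. r (k+j) a = 0"
        using pa k unfolding r_def by auto
    qed
    then show ?thesis by simp
  qed
  have ueq: "u x = d - fact n * (\<Sum>k<n. (r k x / (a - x)^(n-k)) / fact k)" if x: "a < x" for x
  proof -
    define t where "t = a - x"
    have t: "t \<noteq> 0" using x by (simp add: t_def)
    have s1: "(\<Sum>k<n. H k x / fact k * t^k) = (\<Sum>k<n. p k x / fact k * t^k) + (\<Sum>k<n. r k x / fact k * t^k)"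
      unfolding r_def by (simp add: sum.distrib[symmetric] algebra_simps diff_divide_distrib)
    have s2: "(\<Sum>k<n. r k x / fact k * t^k) / t^n = (\<Sum>k<n. (r k x / t^(n-k)) / fact k)"
      unfolding sum_divide_distrib
    proof (rule sum.cong)
      fix k assume "k \<in> {..<n}"
      then have "t^n = t^k * t^(n-k)" by (simp add: power_add[symmetric])
      then show "r k x / fact k * t ^ k / t ^ n = r k x / t ^ (n - k) / fact k"
        using t by (simp add: field_simps)
    qed simp
    have "u x = fact n * P x / t^n" using x by (simp add: u_def t_def)
    also have "P x = d / fact n * t^n - (\<Sum>k<n. r k x / fact k * t^k)"
      unfolding P_def t_def[symmetric] s1 Sp[of x, folded t_def] by simp
    also have "fact n * (d / fact n * t^n - (\<Sum>k<n. r k x / fact k * t^k)) / t^n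
        = d - fact n * ((\<Sum>k<n. r k x / fact k * t^k) / t^n)"
      using t by (simp add: field_simps)
    finally have "u x = d - fact n * ((\<Sum>k<n. r k x / fact k * t^k) / t^n)" .
    then show ?thesis unfolding s2 unfolding t_def .
  qed
  have ulim: "(u \<longlongrightarrow> d) (at_right a)"
  proof -
    have "((\<lambda>x. d - fact n * (\<Sum>k<n. (r k x / (a - x)^(n-k)) / fact k)) \<longlongrightarrow>
           d - fact n * (\<Sum>k<n. 0 / fact k)) (at_right a)"
      by (intro tendsto_intros tendsto_sum rlim) auto
    then have "((\<lambda>x. d - fact n * (\<Sum>k<n. (r k x / (a - x)^(n-k)) / fact k)) \<longlongrightarrow> d) (at_right a)"
      by simp
    moreover have "eventually (\<lambda>x. d - fact n * (\<Sum>k<n. (r k x / (a - x)^(n-k)) / fact k) = u x) (at_right a)"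
      using eventually_at_right_less[of a] by (rule eventually_mono) (simp add: ueq)
    ultimately show ?thesis using tendsto_cong by fastforce
  qed
  have ucont: "continuous_on {a..b} u"
    unfolding continuous_on_eq_continuous_within
  proof
    fix x assume x: "x \<in> {a..b}"
    show "continuous (at x within {a..b}) u"
    proof (cases "x = a")
      case True
      then show ?thesis using ulim ab
        by (simp add: continuous_within at_within_Icc_at_right u_def)
    next
      case False
      then have "x \<in> {a<..b}" using x by auto
      then show ?thesis using uder DERIV_continuous by blast
    qed
  qed
  have ua: "u a = d" by (simp add: u_def)
  have ub: "u b - u a = fact n * psi b / (a - b)^n"
  proof -
    have "a - b \<noteq> 0" using ab by simp
    then show ?thesis using ab unfolding ua
      by (simp add: u_def psiP Hnb field_simps)
  qed
  have cond: "u b = u a \<or> (u b - u a) * u' b < 0"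
  proof (cases "psi b = 0")
    case True then show ?thesis using ub by simp
  next
    case False
    have "(u b - u a) * u' b = real n * (fact n * psi b / (a - b)^n)^2 / (a - b)"
      unfolding ub u'_def by (simp add: power2_eq_square field_simps)
    moreover have "real n * (fact n * psi b / (a - b)^n)^2 > 0"
    proof -
      have "fact n * psi b / (a - b)^n \<noteq> 0" using False ab by simp
      then have "(fact n * psi b / (a - b)^n)^2 > 0" by simp
      moreover have "real n > 0" using n by simp
      ultimately show ?thesis by simp
    qed
    ultimately show ?thesis using ab by (simp add: divide_pos_neg)
  qed
  obtain \<eta> where eta: "\<eta> \<in> {a<..<b}" "u' \<eta> = 0"
    using flett_core[OF ab ucont uder cond] by blast
  then have "psi \<eta> = 0" using n by (simp add: u'_def)
  moreover have "psi \<eta> = (f a - taylor_poly Df n \<eta> a) - C * (g a - taylor_poly Dg n \<eta> a)"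
  proof -
    have S: "(\<Sum>k\<le>n. H k \<eta> / fact k * (a - \<eta>)^k) = (\<Sum>k\<le>n. Df k \<eta> / fact k * (a - \<eta>)^k) - C * (\<Sum>k\<le>n. Dg k \<eta> / fact k * (a - \<eta>)^k)"
      unfolding sum_distrib_left sum_subtractf[symmetric]
      by (rule sum.cong) (simp_all add: H_def algebra_simps diff_divide_distrib)
    show ?thesis unfolding psi_def taylor_poly_def S
      by (simp add: H_def assms(3,4)[symmetric] algebra_simps)
  qed
  ultimately show ?thesis using eta(1) unfolding C_def[symmetric] by force
qed

end
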